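(* Let $G$ be a finitely generated group and $H$ a finitely generated normal subgroup of $G$. Let $\Phi$ be a uniformly continuous action of $G$ on a metric space $\Omega$, and let $U,V\subset\Omega$. If the restricted action $\Phi|_{H}$ (of $H$ on $\Omega$) is topologically Anosov with respect to $(U,V)$, then $\Phi$ is topologically Anosov with respect to $(U,V)$.
   Context: Let $(\Omega,\mathrm{dist})$ be a metric space; $B(\delta,x)=\{y:\mathrm{dist}(x,y)<\delta\}$ and $B(\delta,U)=\bigcup_{x\in U}B(\delta,x)$. An action of a group $G$ is a map $\Phi:G\times\Omega\to\Omega$ such that each $f_g=\Phi(g,\cdot)$ is a homeomorphism of $\Omega$, $\Phi(e,x)=x$, and $\Phi(g_1g_2,x)=\Phi(g_1,\Phi(g_2,x))$. For a finitely generated $G$, the action is uniformly continuous if for some finite symmetric generating set $S$ (symmetric: $s\in S\Rightarrow s^{-1}\in S$) all maps $f_s$, $s\in S$, are uniformly continuous. Fix a finite symmetric generating set $S$ of $G$. For $d>0$, a family $\{y_g\}_{g\in G}\subset\Omega$ is a $d$-pseudotrajectory if $\mathrm{dist}(y_{sg},f_s(y_g))<d$ for all $s\in S$, $g\in G$. A uniformly continuous action has the shadowing property on $V\subset\Omega$ if for every $\varepsilon>0$ there is $d>0$ such that for every $d$-pseudotrajectory $\{y_g\}$ with all $y_g\in V$ there is $x_e\in\Omega$ with $\mathrm{dist}(y_g,f_g(x_e))<\varepsilon$ for all $g\in G$ (this property does not depend on the choice of $S$). The action is expansive on $U\subset\Omega$ if there is $\Delta>0$ such that whenever $x_1,x_2\in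 U$ satisfy $\Phi(g,x_1),\Phi(g,x_2)\in U$ and $\mathrm{dist}(\Phi(g,x_1),\Phi(g,x_2))<\Delta$ for all $g\in G$, then $x_1=x_2$. The action is topologically Anosov with respect to $(U,V)$ if (TA1) there is $\gamma>0$ with $B(\gamma,V)\subset U$, (TA2) it has the shadowing property on $V$, and (TA3) it is expansive on $U$. *)

theory Defs
  imports "HOL-Analysis.Analysis" "HOL-Algebra.Algebra"
begin

definition fin_gen_group :: "('g, 'b) monoid_scheme \<Rightarrow> bool" where
  "fin_gen_group G \<longleftrightarrow>
     (\<exists>S. finite S \<and> S \<subseteq> carrier G \<and> generate G S = carrier G)"

definition fin_sym_gen_set :: "('g, 'b) monoid_scheme \<Rightarrow> 'g set \<Rightarrow> bool" where
  "fin_sym_gen_set G S \<longleftrightarrow>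
     finite S \<and> S \<subseteq> carrier G \<and> generate G S = carrier G \<and>
     (\<forall>s\<in>S. inv\<^bsub>G\<^esub> s \<in> S)"

definition group_action :: "('g, 'b) monoid_scheme \<Rightarrow> ('g \<Rightarrow> 'a::topological_space \<Rightarrow> 'a) \<Rightarrow> bool" where
  "group_action G \<Phi> \<longleftrightarrow>
     (\<forall>g\<in>carrier G. \<exists>h. homeomorphism UNIV UNIV (\<Phi> g) h) \<and>
     (\<forall>x. \<Phi> \<one>\<^bsub>G\<^esub> x = x) \<and>
     (\<forall>g1\<in>carrier G. \<forall>g2\<in>carrier G. \<forall>x. \<Phi> (g1 \<otimes>\<^bsub>G\<^esub> g2) x = \<Phi> g1 (\<Phi> g2 x))"

definition unif_cont_action :: "('g, 'b) monoid_scheme \<Rightarrow> ('g \<Rightarrow> 'a::metric_space \<Rightarrow> 'a) \<Rightarrow> bool" where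
  "unif_cont_action G \<Phi> \<longleftrightarrow>
     (\<exists>S. fin_sym_gen_set G S \<and> (\<forall>s\<in>S. uniformly_continuous_on UNIV (\<Phi> s)))"

definition pseudotrajectory ::
  "('g, 'b) monoid_scheme \<Rightarrow> 'g set \<Rightarrow> ('g \<Rightarrow> 'a::metric_space \<Rightarrow> 'a) \<Rightarrow> real \<Rightarrow> ('g \<Rightarrow> 'a) \<Rightarrow> bool" where
  "pseudotrajectory G S \<Phi> d y \<longleftrightarrow>
     (\<forall>s\<in>S. \<forall>g\<in>carrier G. dist (y (s \<otimes>\<^bsub>G\<^esub> g)) (\<Phi> s (y g)) < d)"

definition shadowing_wrt ::
  "('g, 'b) monoid_scheme \<Rightarrow> 'g set \<Rightarrow> ('g \<Rightarrow> 'a::metric_space \<Rightarrow> 'a) \<Rightarrow> 'a set \<Rightarrow> bool" where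
  "shadowing_wrt G S \<Phi> V \<longleftrightarrow>
     (\<forall>\<epsilon>>0. \<exists>d>0. \<forall>y. pseudotrajectory G S \<Phi> d y \<and> (\<forall>g\<in>carrier G. y g \<in> V) \<longrightarrow>
        (\<exists>x. \<forall>g\<in>carrier G. dist (y g) (\<Phi> g x) < \<epsilon>))"

(* the paper states the property is independent of S; we take "for some
   finite symmetric generating set" *)
definition shadowing_on ::
  "('g, 'b) monoid_scheme \<Rightarrow> ('g \<Rightarrow> 'a::metric_space \<Rightarrow> 'a) \<Rightarrow> 'a set \<Rightarrow> bool" where
  "shadowing_on G \<Phi> V \<longleftrightarrow> (\<exists>S. fin_sym_gen_set G S \<and> shadowing_wrt G S \<Phi> V)"

definition expansive_on ::
  "('g, 'b) monoid_scheme \<Rightarrow> ('g \<Rightarrow> 'a::metric_space \<Rightarrow> 'a) \<Rightarrow> 'a set \<Rightarrow> bool" where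
  "expansive_on G \<Phi> U \<longleftrightarrow>
     (\<exists>\<Delta>>0. \<forall>x1\<in>U. \<forall>x2\<in>U.
        (\<forall>g\<in>carrier G. \<Phi> g x1 \<in> U \<and> \<Phi> g x2 \<in> U \<and> dist (\<Phi> g x1) (\<Phi> g x2) < \<Delta>)
        \<longrightarrow> x1 = x2)"

definition ball_set :: "real \<Rightarrow> 'a::metric_space set \<Rightarrow> 'a set" where
  "ball_set \<delta> V = (\<Union>x\<in>V. ball x \<delta>)"

definition topologically_anosov ::
  "('g, 'b) monoid_scheme \<Rightarrow> ('g \<Rightarrow> 'a::metric_space \<Rightarrow> 'a) \<Rightarrow> 'a set \<Rightarrow> 'a set \<Rightarrow> bool" where
  "topologically_anosov G \<Phi> U V \<longleftrightarrow>
     (\<exists>\<gamma>>0. ball_set \<gamma> V \<subseteq> U) \<and> shadowing_on G \<Phi> V \<and> expansive_on G \<Phi> U"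

end

theory Submission
  imports Defs
begin

definition ucf :: "('a::metric_space \<Rightarrow> 'a) \<Rightarrow> bool" where
  "ucf f \<longleftrightarrow> (\<forall>e>0. \<exists>d>0. \<forall>a b. dist a b < d \<longrightarrow> dist (f a) (f b) < e)"

lemma ucf_iff: "uniformly_continuous_on UNIV f \<longleftrightarrow> ucf f"
  unfolding ucf_def uniformly_continuous_on_def by (metis UNIV_I dist_commute)

lemma finite_unif:
  assumes "finite A" "\<forall>a\<in>A. \<exists>\<delta>>0. P a \<delta>"
    "\<And>a \<delta> \<delta>'. P a \<delta> \<Longrightarrow> 0 < \<delta>' \<Longrightarrow> \<delta>' \<le> \<delta> \<Longrightarrow> P a \<delta>'"
  shows "\<exists>\<delta>::real>0. \<forall>a\<in>A. P a \<delta>"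
  using assms(1,2)
proof (induction A rule: finite_induct)
  case empty
  show ?case by (rule exI[of _ 1]) simp
next
  case (insert x F)
  then obtain d1 where d1: "d1 > 0" "\<forall>a\<in>F. P a d1" by auto
  from insert obtain d2 where d2: "d2 > 0" "P x d2" by auto
  show ?case
    apply (rule exI[of _ "min d1 d2"])
    using d1 d2 assms(3) by auto
qed

lemma act_one:
  assumes "group_action G \<Phi>" shows "\<Phi> \<one>\<^bsub>G\<^esub> = (\<lambda>x. x)"
  using assms unfolding group_action_def by auto

lemma act_mult:
  assumes "group_action G \<Phi>" "a \<in> carrier G" "b \<in> carrier G"
  shows "\<Phi> (a \<otimes>\<^bsub>G\<^esub> b) x = \<Phi> a (\<Phi> b x)"
  using assms unfolding group_action_def by auto

lemma uc_gen:
  assumes "group G" "group_action G \<Phi>" "\<forall>s\<in>S. ucf (\<Phi> s)" "S \<subseteq> carrier G"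
    "\<forall>s\<in>S. inv\<^bsub>G\<^esub> s \<in> S" "t \<in> generate G S"
  shows "ucf (\<Phi> t)"
  using assms(6)
proof (induction rule: generate.induct)
  case one
  then show ?case using act_one[OF assms(2)] unfolding ucf_def by auto
next
  case (incl h)
  then show ?case using assms(3) by auto
next
  case (inv h)
  then show ?case using assms(3,5) by auto
next
  case (eng h1 h2)
  have c1: "h1 \<in> carrier G" "h2 \<in> carrier G"
    using eng group.generate_in_carrier[OF assms(1) assms(4)] by auto
  show ?case unfolding ucf_def
  proof (intro allI impI)
    fix e :: real assume "e > 0"
    then obtain d1 where d1: "d1 > 0" "\<forall>a b. dist a b < d1 \<longrightarrow> dist (\<Phi> h1 a) (\<Phi> h1 b) < e"
      using eng.IH(1) unfolding ucf_def by blast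
    then obtain d2 where d2: "d2 > 0" "\<forall>a b. dist a b < d2 \<longrightarrow> dist (\<Phi> h2 a) (\<Phi> h2 b) < d1"
      using eng.IH(2) unfolding ucf_def by blast
    show "\<exists>d>0. \<forall>a b. dist a b < d \<longrightarrow> dist (\<Phi> (h1 \<otimes>\<^bsub>G\<^esub> h2) a) (\<Phi> (h1 \<otimes>\<^bsub>G\<^esub> h2) b) < e"
      using d1 d2 act_mult[OF assms(2) c1] by auto
  qed
qed

lemma pseudo_gen:
  assumes "group G" "group_action G \<Phi>" "\<forall>s\<in>S. ucf (\<Phi> s)" "S \<subseteq> carrier G"
    "\<forall>s\<in>S. inv\<^bsub>G\<^esub> s \<in> S" "t \<in> generate G S"
  shows "\<forall>\<eta>>0. \<exists>d>0. \<forall>y. pseudotrajectory G S \<Phi> d y \<longrightarrow>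
           (\<forall>k\<in>carrier G. dist (y (t \<otimes>\<^bsub>G\<^esub> k)) (\<Phi> t (y k)) < \<eta>)"
  using assms(6)
proof (induction rule: generate.induct)
  case one
  then show ?case using act_one[OF assms(2)] monoid.l_one[OF group.is_monoid[OF assms(1)]]
    by (auto intro: exI[of _ 1])
next
  case (incl h)
  then show ?case unfolding pseudotrajectory_def by blast
next
  case (inv h)
  then have "inv\<^bsub>G\<^esub> h \<in> S" using assms(5) by auto
  then show ?case unfolding pseudotrajectory_def by blast
next
  case (eng h1 h2)
  have c1: "h1 \<in> carrier G" "h2 \<in> carrier G"
    using eng group.generate_in_carrier[OF assms(1) assms(4)] by auto
  have u1: "ucf (\<Phi> h1)" using uc_gen[OF assms(1-5) eng(1)] .
  show ?case
  proof (intro allI impI)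
    fix e :: real assume e: "e > 0"
    then obtain \<delta> where \<delta>: "\<delta> > 0" "\<forall>a b. dist a b < \<delta> \<longrightarrow> dist (\<Phi> h1 a) (\<Phi> h1 b) < e/2"
      using u1 unfolding ucf_def by (meson half_gt_zero)
    obtain d1 where d1: "d1 > 0" "\<forall>y. pseudotrajectory G S \<Phi> d1 y \<longrightarrow>
           (\<forall>k\<in>carrier G. dist (y (h1 \<otimes>\<^bsub>G\<^esub> k)) (\<Phi> h1 (y k)) < e/2)"
      using eng.IH(1) e by (meson half_gt_zero)
    obtain d2 where d2: "d2 > 0" "\<forall>y. pseudotrajectory G S \<Phi> d2 y \<longrightarrow>
           (\<forall>k\<in>carrier G. dist (y (h2 \<otimes>\<^bsub>G\<^esub> k)) (\<Phi> h2 (y k)) < \<delta>)"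
      using eng.IH(2) \<delta> by blast
    have mono: "pseudotrajectory G S \<Phi> d' y" if "pseudotrajectory G S \<Phi> d y" "d \<le> d'" for d d' y
      using that unfolding pseudotrajectory_def by force
    show "\<exists>d>0. \<forall>y. pseudotrajectory G S \<Phi> d y \<longrightarrow>
           (\<forall>k\<in>carrier G. dist (y (h1 \<otimes>\<^bsub>G\<^esub> h2 \<otimes>\<^bsub>G\<^esub> k)) (\<Phi> (h1 \<otimes>\<^bsub>G\<^esub> h2) (y k)) < e)"
    proof (intro exI[of _ "min d1 d2"] conjI allI impI ballI)
      show "min d1 d2 > 0" using d1 d2 by auto
      fix y k assume py: "pseudotrajectory G S \<Phi> (min d1 d2) y" and k: "k \<in> carrier G"
      have k2: "h2 \<otimes>\<^bsub>G\<^esub> k \<in> carrier G" using k c1 group.subgroupE(4)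
        by (simp add: assms(1) group.is_monoid monoid.m_closed)
      have A: "dist (y (h1 \<otimes>\<^bsub>G\<^esub> (h2 \<otimes>\<^bsub>G\<^esub> k))) (\<Phi> h1 (y (h2 \<otimes>\<^bsub>G\<^esub> k))) < e/2"
        using d1(2) mono[OF py] k2 by auto
      have "dist (y (h2 \<otimes>\<^bsub>G\<^esub> k)) (\<Phi> h2 (y k)) < \<delta>"
        using d2(2) mono[OF py] k by auto
      then have B: "dist (\<Phi> h1 (y (h2 \<otimes>\<^bsub>G\<^esub> k))) (\<Phi> h1 (\<Phi> h2 (y k))) < e/2"
        using \<delta> by auto
      have eq1: "h1 \<otimes>\<^bsub>G\<^esub> h2 \<otimes>\<^bsub>G\<^esub> k = h1 \<otimes>\<^bsub>G\<^esub> (h2 \<otimes>\<^bsub>G\<^esub> k)"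
        using c1 k by (simp add: assms(1) group.is_monoid monoid.m_assoc)
      have eq2: "\<Phi> (h1 \<otimes>\<^bsub>G\<^esub> h2) (y k) = \<Phi> h1 (\<Phi> h2 (y k))"
        using act_mult[OF assms(2) c1] .
      show "dist (y (h1 \<otimes>\<^bsub>G\<^esub> h2 \<otimes>\<^bsub>G\<^esub> k)) (\<Phi> (h1 \<otimes>\<^bsub>G\<^esub> h2) (y k)) < e"
        unfolding eq1 eq2 by (rule le_less_trans[OF dist_triangle[where y="\<Phi> h1 (y (h2 \<otimes>\<^bsub>G\<^esub> k))"]]) (use A B in simp)
    qed
  qed
qed


theorem lemma1:
  fixes G :: "('g, 'b) monoid_scheme"
    and H :: "'g set"
    and \<Phi> :: "'g \<Rightarrow> 'a::metric_space \<Rightarrow> 'a"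
    and U V :: "'a set"
  assumes "group G"
    and "fin_gen_group G"
    and "H \<lhd> G"
    and "fin_gen_group (G\<lparr>carrier := H\<rparr>)"
    and "group_action G \<Phi>"
    and "unif_cont_action G \<Phi>"
    and "topologically_anosov (G\<lparr>carrier := H\<rparr>) \<Phi> U V"
  shows "topologically_anosov G \<Phi> U V"
proof -
  interpret G: group G by fact
  interpret N: normal H G by fact
  have subH: "H \<subseteq> carrier G" using N.subset .
  have oneH: "\<one>\<^bsub>G\<^esub> \<in> H" using N.one_closed .
  have act1: "\<Phi> \<one>\<^bsub>G\<^esub> = (\<lambda>x. x)" using act_one[OF assms(5)] .
  obtain \<gamma> where \<gamma>: "\<gamma> > 0" "ball_set \<gamma> V \<subseteq> U"
    using assms(7) unfolding topologically_anosov_def by blast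
  obtain SH where SH: "fin_sym_gen_set (G\<lparr>carrier := H\<rparr>) SH"
      "shadowing_wrt (G\<lparr>carrier := H\<rparr>) SH \<Phi> V"
    using assms(7) unfolding topologically_anosov_def shadowing_on_def by blast
  have SHH: "SH \<subseteq> H" "finite SH" using SH(1) unfolding fin_sym_gen_set_def by auto
  obtain \<Delta> where \<Delta>: "\<Delta> > 0" "\<forall>x1\<in>U. \<forall>x2\<in>U.
        (\<forall>g\<in>H. \<Phi> g x1 \<in> U \<and> \<Phi> g x2 \<in> U \<and> dist (\<Phi> g x1) (\<Phi> g x2) < \<Delta>)
        \<longrightarrow> x1 = x2"
    using assms(7) unfolding topologically_anosov_def expansive_on_def by auto
  obtain S where S: "fin_sym_gen_set G S" "\<forall>s\<in>S. uniformly_continuous_on UNIV (\<Phi> s)"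
    using assms(6) unfolding unif_cont_action_def by blast
  have Sfin: "finite S" and Ssub: "S \<subseteq> carrier G" and Sgen: "generate G S = carrier G"
    and Ssym: "\<forall>s\<in>S. inv\<^bsub>G\<^esub> s \<in> S"
    using S(1) unfolding fin_sym_gen_set_def by auto
  have Suc: "\<forall>s\<in>S. ucf (\<Phi> s)" using S(2) ucf_iff by blast
  have mono: "pseudotrajectory G S \<Phi> d' y" if "pseudotrajectory G S \<Phi> d y" "d \<le> d'" for d d' y
    using that unfolding pseudotrajectory_def by force
  have TA1: "\<exists>\<gamma>>0. ball_set \<gamma> V \<subseteq> U" using \<gamma> by blast
  have TA3: "expansive_on G \<Phi> U"
    unfolding expansive_on_def using \<Delta> subH by blast
  have "shadowing_wrt G S \<Phi> V"
    unfolding shadowing_wrt_def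
  proof (intro allI impI)
    fix \<epsilon> :: real assume \<epsilon>: "\<epsilon> > 0"
    define \<eta> where "\<eta> = min (\<gamma>/2) (\<Delta>/3)"
    have \<eta>: "\<eta> > 0" "2*\<eta> \<le> \<gamma>" "3*\<eta> \<le> \<Delta>" using \<gamma> \<Delta> unfolding \<eta>_def by auto
    obtain \<delta>0 where \<delta>0: "\<delta>0 > 0" "\<forall>s\<in>S. \<forall>a b. dist a b < \<delta>0 \<longrightarrow> dist (\<Phi> s a) (\<Phi> s b) < \<eta>"
    proof -
      have "\<exists>\<delta>>0. \<forall>s\<in>S. (\<lambda>s \<delta>. \<forall>a b. dist a b < \<delta> \<longrightarrow> dist (\<Phi> s a) (\<Phi> s b) < \<eta>) s \<delta>"
        apply (rule finite_unif[OF Sfin])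
        using Suc \<eta>(1) unfolding ucf_def apply blast
        by auto
      then show ?thesis using that by blast
    qed
    define \<epsilon>' where "\<epsilon>' = min \<epsilon> (min \<delta>0 \<eta>)"
    have \<epsilon>': "\<epsilon>' > 0" "\<epsilon>' \<le> \<epsilon>" "\<epsilon>' \<le> \<delta>0" "\<epsilon>' \<le> \<eta>"
      using \<epsilon> \<delta>0 \<eta> unfolding \<epsilon>'_def by auto
    obtain d' where d': "d' > 0" "\<forall>y. pseudotrajectory (G\<lparr>carrier := H\<rparr>) SH \<Phi> d' y
        \<and> (\<forall>g\<in>H. y g \<in> V) \<longrightarrow> (\<exists>x. \<forall>g\<in>H. dist (y g) (\<Phi> g x) < \<epsilon>')"
      using SH(2) \<epsilon>'(1) unfolding shadowing_wrt_def by force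
    obtain d1 where d1: "d1 > 0" "\<forall>t\<in>SH. \<forall>y. pseudotrajectory G S \<Phi> d1 y \<longrightarrow>
           (\<forall>k\<in>carrier G. dist (y (t \<otimes>\<^bsub>G\<^esub> k)) (\<Phi> t (y k)) < d')"
    proof -
      have "\<exists>\<delta>>0. \<forall>t\<in>SH. (\<lambda>t \<delta>. \<forall>y. pseudotrajectory G S \<Phi> \<delta> y \<longrightarrow>
           (\<forall>k\<in>carrier G. dist (y (t \<otimes>\<^bsub>G\<^esub> k)) (\<Phi> t (y k)) < d')) t \<delta>"
      proof (rule finite_unif[OF SHH(2)])
        show "\<forall>t\<in>SH. \<exists>\<delta>>0. \<forall>y. pseudotrajectory G S \<Phi> \<delta> y \<longrightarrow>
           (\<forall>k\<in>carrier G. dist (y (t \<otimes>\<^bsub>G\<^esub> k)) (\<Phi> t (y k)) < d')"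
        proof
          fix t assume "t \<in> SH"
          then have "t \<in> generate G S" using SHH subH Sgen by auto
          then show "\<exists>\<delta>>0. \<forall>y. pseudotrajectory G S \<Phi> \<delta> y \<longrightarrow>
           (\<forall>k\<in>carrier G. dist (y (t \<otimes>\<^bsub>G\<^esub> k)) (\<Phi> t (y k)) < d')"
            using pseudo_gen[OF assms(1,5) Suc Ssub Ssym] d'(1) by blast
        qed
      next
        fix a \<delta> \<delta>'
        assume "\<forall>y. pseudotrajectory G S \<Phi> \<delta> y \<longrightarrow>
           (\<forall>k\<in>carrier G. dist (y (a \<otimes>\<^bsub>G\<^esub> k)) (\<Phi> a (y k)) < d')" "0 < \<delta>'" "\<delta>' \<le> \<delta>"
        then show "\<forall>y. pseudotrajectory G S \<Phi> \<delta>' y \<longrightarrow>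
           (\<forall>k\<in>carrier G. dist (y (a \<otimes>\<^bsub>G\<^esub> k)) (\<Phi> a (y k)) < d')"
          using mono by blast
      qed
      then show ?thesis using that by blast
    qed
    define d where "d = min d1 \<eta>"
    have d: "d > 0" "d \<le> d1" "d \<le> \<eta>" using d1 \<eta> unfolding d_def by auto
    show "\<exists>d>0. \<forall>y. pseudotrajectory G S \<Phi> d y \<and> (\<forall>g\<in>carrier G. y g \<in> V) \<longrightarrow>
        (\<exists>x. \<forall>g\<in>carrier G. dist (y g) (\<Phi> g x) < \<epsilon>)"
    proof (intro exI[of _ d] conjI allI impI)
      show "d > 0" by fact
      fix y assume yy: "pseudotrajectory G S \<Phi> d y \<and> (\<forall>g\<in>carrier G. y g \<in> V)"
      have py: "pseudotrajectory G S \<Phi> d y" and yV: "\<forall>g\<in>carrier G. y g \<in> V" using yy by auto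
      have ex: "\<exists>x. \<forall>h\<in>H. dist (y (h \<otimes>\<^bsub>G\<^esub> g)) (\<Phi> h x) < \<epsilon>'" if g: "g \<in> carrier G" for g
      proof -
        have "pseudotrajectory (G\<lparr>carrier := H\<rparr>) SH \<Phi> d' (\<lambda>h. y (h \<otimes>\<^bsub>G\<^esub> g))"
          unfolding pseudotrajectory_def
        proof (intro ballI)
          fix t h assume t: "t \<in> SH" and h: "h \<in> carrier (G\<lparr>carrier := H\<rparr>)"
          have tc: "t \<in> carrier G" "h \<in> carrier G" using t h SHH subH by auto
          have "dist (y (t \<otimes>\<^bsub>G\<^esub> (h \<otimes>\<^bsub>G\<^esub> g))) (\<Phi> t (y (h \<otimes>\<^bsub>G\<^esub> g))) < d'"
            using d1(2) t mono[OF py d(2)] tc g by blast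
          then show "dist (y (t \<otimes>\<^bsub>G\<lparr>carrier := H\<rparr>\<^esub> h \<otimes>\<^bsub>G\<^esub> g)) (\<Phi> t (y (h \<otimes>\<^bsub>G\<^esub> g))) < d'"
            using tc g by (simp add: G.m_assoc)
        qed
        moreover have "\<forall>h\<in>H. y (h \<otimes>\<^bsub>G\<^esub> g) \<in> V" using yV g subH by auto
        ultimately show ?thesis using d'(2) by blast
      qed
      define xg where "xg g = (SOME x. \<forall>h\<in>H. dist (y (h \<otimes>\<^bsub>G\<^esub> g)) (\<Phi> h x) < \<epsilon>')" for g
      have xg: "\<forall>h\<in>H. dist (y (h \<otimes>\<^bsub>G\<^esub> g)) (\<Phi> h (xg g)) < \<epsilon>'" if "g \<in> carrier G" for g
        unfolding xg_def using someI_ex[OF ex[OF that]] .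
      have key: "xg (s \<otimes>\<^bsub>G\<^esub> g) = \<Phi> s (xg g)" if s: "s \<in> S" and g: "g \<in> carrier G" for s g
      proof -
        have sc: "s \<in> carrier G" using s Ssub by auto
        have sg: "s \<otimes>\<^bsub>G\<^esub> g \<in> carrier G" using sc g by simp
        have claim: "\<Phi> h (\<Phi> s (xg g)) \<in> U \<and> \<Phi> h (xg (s \<otimes>\<^bsub>G\<^esub> g)) \<in> U \<and>
            dist (\<Phi> h (\<Phi> s (xg g))) (\<Phi> h (xg (s \<otimes>\<^bsub>G\<^esub> g))) < \<Delta>" if h: "h \<in> H" for h
        proof -
          have hc: "h \<in> carrier G" using h subH by auto
          define h'' where "h'' = inv\<^bsub>G\<^esub> s \<otimes>\<^bsub>G\<^esub> h \<otimes>\<^bsub>G\<^esub> s"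
          have h''H: "h'' \<in> H" unfolding h''_def
            using N.inv_op_closed2[of "inv\<^bsub>G\<^esub> s" h] sc h by simp
          have h''c: "h'' \<in> carrier G" using h''H subH by auto
          have hs: "h \<otimes>\<^bsub>G\<^esub> s = s \<otimes>\<^bsub>G\<^esub> h''" unfolding h''_def
            using sc hc by (simp add: G.m_assoc[symmetric])
          have hsg: "h \<otimes>\<^bsub>G\<^esub> (s \<otimes>\<^bsub>G\<^esub> g) = s \<otimes>\<^bsub>G\<^esub> (h'' \<otimes>\<^bsub>G\<^esub> g)"
            using hs sc hc h''c g by (metis G.m_assoc)
          have hgc: "h'' \<otimes>\<^bsub>G\<^esub> g \<in> carrier G" using h''c g by simp
          have Yc: "h \<otimes>\<^bsub>G\<^esub> (s \<otimes>\<^bsub>G\<^esub> g) \<in> carrier G" using hc sg by simp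
          define Y where "Y = y (h \<otimes>\<^bsub>G\<^esub> (s \<otimes>\<^bsub>G\<^esub> g))"
          have YV: "Y \<in> V" unfolding Y_def using yV Yc by auto
          have a_eq: "\<Phi> h (\<Phi> s (xg g)) = \<Phi> s (\<Phi> h'' (xg g))"
            using act_mult[OF assms(5) hc sc] act_mult[OF assms(5) sc h''c] hs by metis
          have "dist (y (h'' \<otimes>\<^bsub>G\<^esub> g)) (\<Phi> h'' (xg g)) < \<epsilon>'" using xg[OF g] h''H by auto
          then have C1: "dist (\<Phi> s (y (h'' \<otimes>\<^bsub>G\<^esub> g))) (\<Phi> s (\<Phi> h'' (xg g))) < \<eta>"
            using \<delta>0(2) s \<epsilon>'(3) by auto
          have C2: "dist (y (s \<otimes>\<^bsub>G\<^esub> (h'' \<otimes>\<^bsub>G\<^esub> g))) (\<Phi> s (y (h'' \<otimes>\<^bsub>G\<^esub> g))) < \<eta>"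
            using py s hgc d(3) unfolding pseudotrajectory_def by fastforce
          have A: "dist Y (\<Phi> h (\<Phi> s (xg g))) < 2*\<eta>"
            unfolding Y_def a_eq hsg by (rule le_less_trans[OF dist_triangle[where y="\<Phi> s (y (h'' \<otimes>\<^bsub>G\<^esub> g))"]]) (use C1 C2 in \<open>simp add: dist_commute\<close>)
          have B: "dist Y (\<Phi> h (xg (s \<otimes>\<^bsub>G\<^esub> g))) < \<eta>"
            unfolding Y_def using xg[OF sg] h \<epsilon>'(4) by fastforce
          have "\<Phi> h (\<Phi> s (xg g)) \<in> ball_set \<gamma> V"
            unfolding ball_set_def using YV A \<eta>(2) by (intro UN_I[of Y]) auto
          moreover have "\<Phi> h (xg (s \<otimes>\<^bsub>G\<^esub> g)) \<in> ball_set \<gamma> V"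
            unfolding ball_set_def using YV B \<eta>(2,1) by (intro UN_I[of Y]) auto
          moreover have "dist (\<Phi> h (\<Phi> s (xg g))) (\<Phi> h (xg (s \<otimes>\<^bsub>G\<^esub> g))) < \<Delta>"
            using A B \<eta>(3) dist_triangle[of "\<Phi> h (\<Phi> s (xg g))" "\<Phi> h (xg (s \<otimes>\<^bsub>G\<^esub> g))" Y]
              dist_commute[of "\<Phi> h (\<Phi> s (xg g))" Y] by linarith
          ultimately show ?thesis using \<gamma>(2) by blast
        qed
        have "\<Phi> s (xg g) \<in> U" "xg (s \<otimes>\<^bsub>G\<^esub> g) \<in> U"
          using claim[OF oneH] by (simp_all add: act1)
        moreover have "\<forall>h\<in>H. \<Phi> h (\<Phi> s (xg g)) \<in> U \<and> \<Phi> h (xg (s \<otimes>\<^bsub>G\<^esub> g)) \<in> U \<and>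
            dist (\<Phi> h (\<Phi> s (xg g))) (\<Phi> h (xg (s \<otimes>\<^bsub>G\<^esub> g))) < \<Delta>" using claim by blast
        ultimately have "\<Phi> s (xg g) = xg (s \<otimes>\<^bsub>G\<^esub> g)"
          using \<Delta>(2)[rule_format, of "\<Phi> s (xg g)" "xg (s \<otimes>\<^bsub>G\<^esub> g)"] by blast
        then show ?thesis by simp
      qed
      have gen: "\<forall>g\<in>carrier G. xg (t \<otimes>\<^bsub>G\<^esub> g) = \<Phi> t (xg g)" if "t \<in> generate G S" for t
        using that
      proof (induction rule: generate.induct)
        case one
        then show ?case using act1 by simp
      next
        case (incl h)
        then show ?case using key by blast
      next
        case (inv h)
        then show ?case using key Ssym by blast
      next
        case (eng h1 h2)
        have c1: "h1 \<in> carrier G" "h2 \<in> carrier G" using eng Sgen by auto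
        show ?case
        proof
          fix g assume g: "g \<in> carrier G"
          have "xg (h1 \<otimes>\<^bsub>G\<^esub> h2 \<otimes>\<^bsub>G\<^esub> g) = xg (h1 \<otimes>\<^bsub>G\<^esub> (h2 \<otimes>\<^bsub>G\<^esub> g))"
            using c1 g by (simp add: G.m_assoc)
          also have "\<dots> = \<Phi> h1 (xg (h2 \<otimes>\<^bsub>G\<^esub> g))" using eng.IH(1) c1 g by simp
          also have "\<dots> = \<Phi> h1 (\<Phi> h2 (xg g))" using eng.IH(2) g by simp
          also have "\<dots> = \<Phi> (h1 \<otimes>\<^bsub>G\<^esub> h2) (xg g)" using act_mult[OF assms(5) c1] by simp
          finally show "xg (h1 \<otimes>\<^bsub>G\<^esub> h2 \<otimes>\<^bsub>G\<^esub> g) = \<Phi> (h1 \<otimes>\<^bsub>G\<^esub> h2) (xg g)" .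
        qed
      qed
      show "\<exists>x. \<forall>g\<in>carrier G. dist (y g) (\<Phi> g x) < \<epsilon>"
      proof (intro exI[of _ "xg \<one>\<^bsub>G\<^esub>"] ballI)
        fix g assume g: "g \<in> carrier G"
        have "xg g = \<Phi> g (xg \<one>\<^bsub>G\<^esub>)" using bspec[OF gen[of g] G.one_closed] g Sgen by simp
        moreover have "dist (y (\<one>\<^bsub>G\<^esub> \<otimes>\<^bsub>G\<^esub> g)) (\<Phi> \<one>\<^bsub>G\<^esub> (xg g)) < \<epsilon>'"
          using xg[OF g] oneH by blast
        ultimately show "dist (y g) (\<Phi> g (xg \<one>\<^bsub>G\<^esub>)) < \<epsilon>" using g act1 \<epsilon>'(2) by simp
      qed
    qed
  qed
  then have TA2: "shadowing_on G \<Phi> V" unfolding shadowing_on_def using S(1) by blast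
  show ?thesis unfolding topologically_anosov_def using TA1 TA2 TA3 by blast
qed

end
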